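(* Let $n=3$ and let $X_1,X_2,X_3$ be nonnegative random variables with no ties; write $p_{ijk}=\Pr(X_i<X_j<X_k)$. Then $q(A)=1/\binom{3}{|A|}$ for all $A\subseteq[3]$ if and only if there is $\lambda\in[0,1]$ with $(p_{123},p_{132},p_{213},p_{231},p_{312},p_{321})=(\lambda,1-\lambda,1-\lambda,\lambda,\lambda,1-\lambda)/3$; whereas $q_j(A)=1/(3\binom{2}{|A|})$ for all $j\in[3]$, $A\subseteq[3]\setminus\{j\}$ if and only if $p_{ijk}=1/6$ for every permutation $(i,j,k)$ of $(1,2,3)$. In particular, symmetry of $q$ does not imply the latter condition.
   Context: No ties: $\Pr(X_i=X_k)=0$ for $i\neq k$. $q(A)=\Pr\big(\max_{i\notin A}X_i<\min_{i\in A}X_i\big)$; $q_j(A)=\Pr\big(\max_{i\notin A\cup\{j\}}X_i<X_j<\min_{i\in A}X_i\big)$ for $A\subseteq[n]\setminus\{j\}$ (empty max $=-\infty$, empty min $=+\infty$). *)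

theory Defs
  imports "HOL-Probability.Probability"
begin

text \<open>Random variables are indexed by 1..n; [n] = {1..n}.
  q(A) = Pr(max_{i notin A} X_i < min_{i in A} X_i), with empty max = -infinity and
  empty min = +infinity, written out as: every X_i (i in [n]-A) is below every X_k (k in A).\<close>

definition qset :: "'a measure \<Rightarrow> (nat \<Rightarrow> 'a \<Rightarrow> real) \<Rightarrow> nat \<Rightarrow> nat set \<Rightarrow> real" where
  "qset M X n A = measure M {\<omega> \<in> space M.
      \<forall>i\<in>{1..n} - A. \<forall>k\<in>A. X i \<omega> < X k \<omega>}"

definition qj :: "'a measure \<Rightarrow> (nat \<Rightarrow> 'a \<Rightarrow> real) \<Rightarrow> nat \<Rightarrow> nat \<Rightarrow> nat set \<Rightarrow> real" where
  "qj M X n j A = measure M {\<omega> \<in> space M.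
      (\<forall>i\<in>{1..n} - (A \<union> {j}). X i \<omega> < X j \<omega>) \<and> (\<forall>k\<in>A. X j \<omega> < X k \<omega>)}"

definition pord :: "'a measure \<Rightarrow> (nat \<Rightarrow> 'a \<Rightarrow> real) \<Rightarrow> nat \<Rightarrow> nat \<Rightarrow> nat \<Rightarrow> real" where
  "pord M X i j k = measure M {\<omega> \<in> space M. X i \<omega> < X j \<omega> \<and> X j \<omega> < X k \<omega>}"

end

theory Submission
  imports Defs
begin

lemma split_meas:
  assumes "prob_space M" "A \<in> sets M" "B \<in> sets M" "C \<in> sets M" "A \<inter> B = {}"
    "AE x in M. (x \<in> C \<longleftrightarrow> x \<in> A \<or> x \<in> B)"
  shows "measure M C = measure M A + measure M B"
proof -
  interpret prob_space M by fact
  have "measure M C = measure M (A \<union> B)"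
    by (rule finite_measure_eq_AE) (use assms in auto)
  also have "\<dots> = measure M A + measure M B"
    by (rule finite_measure_Union) (use assms in auto)
  finally show ?thesis .
qed

lemma atl3: "{1..3::nat} = {1,2,3}" by auto

lemma ball3: "(\<forall>j\<in>{1..3::nat}. P j) \<longleftrightarrow> P 1 \<and> P 2 \<and> P 3"
  unfolding atl3 by blast

theorem mainTheorem10:
  fixes M :: "'a measure" and X :: "nat \<Rightarrow> 'a \<Rightarrow> real"
  assumes "prob_space M"
    and meas: "\<And>i. i \<in> {1..3} \<Longrightarrow> X i \<in> borel_measurable M"
    and nonneg: "\<And>i \<omega>. i \<in> {1..3} \<Longrightarrow> \<omega> \<in> space M \<Longrightarrow> X i \<omega> \<ge> 0"
    and noties: "\<And>i k. i \<in> {1..3} \<Longrightarrow> k \<in> {1..3} \<Longrightarrow> i \<noteq> k \<Longrightarrow>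
                   measure M {\<omega> \<in> space M. X i \<omega> = X k \<omega>} = 0"
  shows "((\<forall>A. A \<subseteq> {1..3} \<longrightarrow> qset M X 3 A = 1 / real (3 choose card A)) \<longleftrightarrow>
           (\<exists>l::real. 0 \<le> l \<and> l \<le> 1 \<and>
              pord M X 1 2 3 = l / 3 \<and> pord M X 1 3 2 = (1 - l) / 3 \<and>
              pord M X 2 1 3 = (1 - l) / 3 \<and> pord M X 2 3 1 = l / 3 \<and>
              pord M X 3 1 2 = l / 3 \<and> pord M X 3 2 1 = (1 - l) / 3))
       \<and> ((\<forall>j\<in>{1..3}. \<forall>A. A \<subseteq> {1..3} - {j} \<longrightarrow>
              qj M X 3 j A = 1 / (3 * real (2 choose card A))) \<longleftrightarrow>
           (\<forall>i j k. {i, j, k} = {1..3::nat} \<longrightarrow> pord M X i j k = 1 / 6))"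
proof -
  interpret P: prob_space M by fact
  have m1[measurable]: "X 1 \<in> borel_measurable M" using meas by auto
  have m2[measurable]: "X 2 \<in> borel_measurable M" using meas by auto
  have m3[measurable]: "X 3 \<in> borel_measurable M" using meas by auto
  have tie: "AE \<omega> in M. X i \<omega> \<noteq> X k \<omega>"
    if "i \<in> {1..3}" "k \<in> {1..3}" "i \<noteq> k" for i k
  proof (rule AE_I')
    have [measurable]: "X i \<in> borel_measurable M" "X k \<in> borel_measurable M"
      using meas that by auto
    have "{\<omega> \<in> space M. X i \<omega> = X k \<omega>} \<in> sets M" by measurable
    then show "{\<omega> \<in> space M. X i \<omega> = X k \<omega>} \<in> null_sets M"
      using noties[OF that] by (simp add: null_sets_def P.emeasure_eq_measure)
  qed auto
  have AE3: "AE \<omega> in M. X 1 \<omega> \<noteq> X 2 \<omega> \<and> X 1 \<omega> \<noteq> X 3 \<omega> \<and> X 2 \<omega> \<noteq> X 3 \<omega>"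
  proof -
    have "AE \<omega> in M. X 1 \<omega> \<noteq> X 2 \<omega>" "AE \<omega> in M. X 1 \<omega> \<noteq> X 3 \<omega>" "AE \<omega> in M. X 2 \<omega> \<noteq> X 3 \<omega>"
      by (auto intro: tie)
    then show ?thesis by eventually_elim auto
  qed
  define a where "a = pord M X 1 2 3"
  define b where "b = pord M X 1 3 2"
  define c where "c = pord M X 2 1 3"
  define d where "d = pord M X 2 3 1"
  define e where "e = pord M X 3 1 2"
  define f where "f = pord M X 3 2 1"
  have nn: "0 \<le> a" "0 \<le> b" "0 \<le> c" "0 \<le> d" "0 \<le> e" "0 \<le> f"
    unfolding a_def b_def c_def d_def e_def f_def pord_def by auto
  note pd = a_def b_def c_def d_def e_def f_def pord_def
  have mx1: "measure M {\<omega> \<in> space M. X 2 \<omega> < X 1 \<omega> \<and> X 3 \<omega> < X 1 \<omega>} = d + f"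
    unfolding pd by (rule split_meas, fact, measurable, auto) (use AE3 in eventually_elim, auto)
  have mx2: "measure M {\<omega> \<in> space M. X 1 \<omega> < X 2 \<omega> \<and> X 3 \<omega> < X 2 \<omega>} = b + e"
    unfolding pd by (rule split_meas, fact, measurable, auto) (use AE3 in eventually_elim, auto)
  have mx3: "measure M {\<omega> \<in> space M. X 1 \<omega> < X 3 \<omega> \<and> X 2 \<omega> < X 3 \<omega>} = a + c"
    unfolding pd by (rule split_meas, fact, measurable, auto) (use AE3 in eventually_elim, auto)
  have mn1: "measure M {\<omega> \<in> space M. X 1 \<omega> < X 2 \<omega> \<and> X 1 \<omega> < X 3 \<omega>} = a + b"
    unfolding pd by (rule split_meas, fact, measurable, auto) (use AE3 in eventually_elim, auto)
  have mn2: "measure M {\<omega> \<in> space M. X 2 \<omega> < X 1 \<omega> \<and> X 2 \<omega> < X 3 \<omega>} = c + d"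
    unfolding pd by (rule split_meas, fact, measurable, auto) (use AE3 in eventually_elim, auto)
  have mn3: "measure M {\<omega> \<in> space M. X 3 \<omega> < X 1 \<omega> \<and> X 3 \<omega> < X 2 \<omega>} = e + f"
    unfolding pd by (rule split_meas, fact, measurable, auto) (use AE3 in eventually_elim, auto)
  have tot0: "measure M (space M) = measure M {\<omega> \<in> space M. X 1 \<omega> < X 3 \<omega> \<and> X 2 \<omega> < X 3 \<omega>}
     + measure M {\<omega> \<in> space M. (X 1 \<omega> < X 2 \<omega> \<and> X 3 \<omega> < X 2 \<omega>) \<or> (X 2 \<omega> < X 1 \<omega> \<and> X 3 \<omega> < X 1 \<omega>)}"
    by (rule split_meas, fact, measurable, auto) (use AE3 in eventually_elim, auto)
  have tot1: "measure M {\<omega> \<in> space M. (X 1 \<omega> < X 2 \<omega> \<and> X 3 \<omega> < X 2 \<omega>) \<or> (X 2 \<omega> < X 1 \<omega> \<and> X 3 \<omega> < X 1 \<omega>)}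
     = measure M {\<omega> \<in> space M. X 1 \<omega> < X 2 \<omega> \<and> X 3 \<omega> < X 2 \<omega>} + measure M {\<omega> \<in> space M. X 2 \<omega> < X 1 \<omega> \<and> X 3 \<omega> < X 1 \<omega>}"
    by (rule split_meas, fact, measurable, auto)
  have tot: "a + b + c + d + e + f = 1"
    using tot0 tot1 mx1 mx2 mx3 P.prob_space by simp

  have ch: "real (3 choose 2) = 3" "real (3 choose 1) = 3" "real (2 choose 1) = 2"
    by (simp_all add: numeral_eq_Suc)
  have ch2: "(3::nat) choose Suc (Suc 0) = 3" "(3::nat) choose Suc 0 = 3" "(2::nat) choose Suc 0 = 2"
    "(3::nat) choose Suc (Suc (Suc 0)) = 1" "(2::nat) choose Suc (Suc 0) = 1"
    by (simp_all add: numeral_eq_Suc)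
  have q0: "qset M X 3 {} = 1" unfolding qset_def using P.prob_space by simp
  have q123: "qset M X 3 {1,2,3} = 1" unfolding qset_def atl3 using P.prob_space by simp
  have q1: "qset M X 3 {1} = d + f" unfolding qset_def atl3 mx1[symmetric]
    by (rule arg_cong[where f="measure M"]) auto
  have q2: "qset M X 3 {2} = b + e" unfolding qset_def atl3 mx2[symmetric]
    by (rule arg_cong[where f="measure M"]) auto
  have q3: "qset M X 3 {3} = a + c" unfolding qset_def atl3 mx3[symmetric]
    by (rule arg_cong[where f="measure M"]) auto
  have q12: "qset M X 3 {1,2} = e + f" unfolding qset_def atl3 mn3[symmetric]
    by (rule arg_cong[where f="measure M"]) auto
  have q13: "qset M X 3 {1,3} = c + d" unfolding qset_def atl3 mn2[symmetric]
    by (rule arg_cong[where f="measure M"]) auto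
  have q23: "qset M X 3 {2,3} = a + b" unfolding qset_def atl3 mn1[symmetric]
    by (rule arg_cong[where f="measure M"]) auto
  have subs: "A \<subseteq> {1..3::nat} \<longleftrightarrow> A = {} \<or> A={1} \<or> A={2} \<or> A={3} \<or> A={1,2} \<or> A={1,3} \<or> A={2,3} \<or> A={1,2,3}" for A
  proof -
    have "A \<subseteq> {1..3::nat} \<longleftrightarrow> A \<in> Pow {1,2,3}" using atl3 by simp
    also have "Pow {1,2,3::nat} = {{},{1},{2},{3},{1,2},{1,3},{2,3},{1,2,3}}"
      by (simp add: Pow_insert insert_commute)
    finally show ?thesis by simp
  qed
  have part1: "(\<forall>A. A \<subseteq> {1..3} \<longrightarrow> qset M X 3 A = 1 / real (3 choose card A)) \<longleftrightarrow>
     (d+f = 1/3 \<and> b+e = 1/3 \<and> a+c = 1/3 \<and> e+f = 1/3 \<and> c+d = 1/3 \<and> a+b = 1/3)"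
    unfolding subs imp_disjL all_conj_distrib simp_thms q0 q123 q1 q2 q3 q12 q13 q23
    by (simp add: ch2)
  have part1': "(d+f = 1/3 \<and> b+e = 1/3 \<and> a+c = 1/3 \<and> e+f = 1/3 \<and> c+d = 1/3 \<and> a+b = 1/3) \<longleftrightarrow>
     (\<exists>l::real. 0 \<le> l \<and> l \<le> 1 \<and> a = l / 3 \<and> b = (1 - l) / 3 \<and>
              c = (1 - l) / 3 \<and> d = l / 3 \<and> e = l / 3 \<and> f = (1 - l) / 3)"
  proof
    assume h: "d+f = 1/3 \<and> b+e = 1/3 \<and> a+c = 1/3 \<and> e+f = 1/3 \<and> c+d = 1/3 \<and> a+b = 1/3"
    show "\<exists>l::real. 0 \<le> l \<and> l \<le> 1 \<and> a = l / 3 \<and> b = (1 - l) / 3 \<and>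
              c = (1 - l) / 3 \<and> d = l / 3 \<and> e = l / 3 \<and> f = (1 - l) / 3"
      by (rule exI[of _ "3*a"]) (use h nn in auto)
  qed auto
  have qj1_0: "qj M X 3 1 {} = d + f" unfolding qj_def atl3 mx1[symmetric]
    by (rule arg_cong[where f="measure M"]) auto
  have qj1_1: "qj M X 3 1 {2} = e" unfolding qj_def atl3 e_def pord_def
    by (rule arg_cong[where f="measure M"]) auto
  have qj1_2: "qj M X 3 1 {3} = c" unfolding qj_def atl3 c_def pord_def
    by (rule arg_cong[where f="measure M"]) auto
  have qj1_3: "qj M X 3 1 {2,3} = a + b" unfolding qj_def atl3 mn1[symmetric]
    by (rule arg_cong[where f="measure M"]) auto
  have qj1_4: "qj M X 3 2 {} = b + e" unfolding qj_def atl3 mx2[symmetric]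
    by (rule arg_cong[where f="measure M"]) auto
  have qj1_5: "qj M X 3 2 {1} = f" unfolding qj_def atl3 f_def pord_def
    by (rule arg_cong[where f="measure M"]) auto
  have qj1_6: "qj M X 3 2 {3} = a" unfolding qj_def atl3 a_def pord_def
    by (rule arg_cong[where f="measure M"]) auto
  have qj1_7: "qj M X 3 2 {1,3} = c + d" unfolding qj_def atl3 mn2[symmetric]
    by (rule arg_cong[where f="measure M"]) auto
  have qj1_8: "qj M X 3 3 {} = a + c" unfolding qj_def atl3 mx3[symmetric]
    by (rule arg_cong[where f="measure M"]) auto
  have qj1_9: "qj M X 3 3 {1} = d" unfolding qj_def atl3 d_def pord_def
    by (rule arg_cong[where f="measure M"]) auto
  have qj1_10: "qj M X 3 3 {2} = b" unfolding qj_def atl3 b_def pord_def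
    by (rule arg_cong[where f="measure M"]) auto
  have qj1_11: "qj M X 3 3 {1,2} = e + f" unfolding qj_def atl3 mn3[symmetric]
    by (rule arg_cong[where f="measure M"]) auto
  note qj1 = qj1_0 qj1_1 qj1_2 qj1_3 qj1_4 qj1_5 qj1_6 qj1_7 qj1_8 qj1_9 qj1_10 qj1_11
  have sj1: "A \<subseteq> {1..3::nat} - {1} \<longleftrightarrow> A = {} \<or> A={2} \<or> A={3} \<or> A={2,3}" for A
  proof -
    have "{1..3::nat} - {1} = {2,3}" by auto
    then have "A \<subseteq> {1..3::nat} - {1} \<longleftrightarrow> A \<in> Pow {2,3}" by simp
    also have "Pow {2,3::nat} = {{},{2},{3},{2,3}}"
      by (simp add: Pow_insert insert_commute)
    finally show ?thesis by simp
  qed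
  have sj2: "A \<subseteq> {1..3::nat} - {2} \<longleftrightarrow> A = {} \<or> A={1} \<or> A={3} \<or> A={1,3}" for A
  proof -
    have "{1..3::nat} - {2} = {1,3}" by auto
    then have "A \<subseteq> {1..3::nat} - {2} \<longleftrightarrow> A \<in> Pow {1,3}" by simp
    also have "Pow {1,3::nat} = {{},{1},{3},{1,3}}"
      by (simp add: Pow_insert insert_commute)
    finally show ?thesis by simp
  qed
  have sj3: "A \<subseteq> {1..3::nat} - {3} \<longleftrightarrow> A = {} \<or> A={1} \<or> A={2} \<or> A={1,2}" for A
  proof -
    have "{1..3::nat} - {3} = {1,2}" by auto
    then have "A \<subseteq> {1..3::nat} - {3} \<longleftrightarrow> A \<in> Pow {1,2}" by simp
    also have "Pow {1,2::nat} = {{},{1},{2},{1,2}}"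
      by (simp add: Pow_insert insert_commute)
    finally show ?thesis by simp
  qed
  have part2: "(\<forall>j\<in>{1..3}. \<forall>A. A \<subseteq> {1..3} - {j} \<longrightarrow>
              qj M X 3 j A = 1 / (3 * real (2 choose card A))) \<longleftrightarrow>
      (d+f = 1/3 \<and> e = 1/6 \<and> c = 1/6 \<and> a+b = 1/3 \<and> b+e = 1/3 \<and> f = 1/6 \<and> a = 1/6 \<and> c+d = 1/3
       \<and> a+c = 1/3 \<and> d = 1/6 \<and> b = 1/6 \<and> e+f=1/3)"
    unfolding ball3 sj1 sj2 sj3
    imp_disjL all_conj_distrib simp_thms qj1
    by (simp add: ch2)
  have perm: "(i,j,k) \<in> {(1,2,3),(1,3,2),(2,1,3),(2,3,1),(3,1,2),(3,2,1)}"
    if h: "{i,j,k} = {1..3::nat}" for i j k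
  proof -
    from h have "i \<in> {1,2,3}" "j \<in> {1,2,3}" "k \<in> {1,2,3}" "1 \<in> {i,j,k}" "2 \<in> {i,j,k}" "3 \<in> {i,j,k}"
      unfolding atl3 by auto
    then have ii: "i=1 \<or> i=2 \<or> i=3" and jj: "j=1 \<or> j=2 \<or> j=3" and kk: "k=1 \<or> k=2 \<or> k=3"
      and m: "1 \<in> {i,j,k}" "2 \<in> {i,j,k}" "3 \<in> {i,j,k}" by blast+
    show ?thesis using ii jj kk m by (elim disjE; simp)
  qed
  have part2': "(\<forall>i j k. {i, j, k} = {1..3::nat} \<longrightarrow> pord M X i j k = 1 / 6) \<longleftrightarrow>
     (a = 1/6 \<and> b = 1/6 \<and> c = 1/6 \<and> d = 1/6 \<and> e = 1/6 \<and> f = 1/6)"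
  proof
    assume h: "\<forall>i j k. {i, j, k} = {1..3::nat} \<longrightarrow> pord M X i j k = 1 / 6"
    have "{1,2,3} = {1..3::nat}" "{1,3,2} = {1..3::nat}" "{2,1,3} = {1..3::nat}"
         "{2,3,1} = {1..3::nat}" "{3,1,2} = {1..3::nat}" "{3,2,1} = {1..3::nat}" by auto
    then show "a = 1/6 \<and> b = 1/6 \<and> c = 1/6 \<and> d = 1/6 \<and> e = 1/6 \<and> f = 1/6"
      using h unfolding a_def b_def c_def d_def e_def f_def by metis
  next
    assume h: "a = 1/6 \<and> b = 1/6 \<and> c = 1/6 \<and> d = 1/6 \<and> e = 1/6 \<and> f = 1/6"
    show "\<forall>i j k. {i, j, k} = {1..3::nat} \<longrightarrow> pord M X i j k = 1 / 6"
    proof (intro allI impI)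
      fix i j k :: nat assume "{i, j, k} = {1..3::nat}"
      from perm[OF this] show "pord M X i j k = 1 / 6"
        using h unfolding a_def b_def c_def d_def e_def f_def by auto
    qed
  qed
  have fin: "(d+f = 1/3 \<and> e = 1/6 \<and> c = 1/6 \<and> a+b = 1/3 \<and> b+e = 1/3 \<and> f = 1/6 \<and> a = 1/6 \<and> c+d = 1/3
       \<and> a+c = 1/3 \<and> d = 1/6 \<and> b = 1/6 \<and> e+f=1/3) \<longleftrightarrow>
     (a = 1/6 \<and> b = 1/6 \<and> c = 1/6 \<and> d = 1/6 \<and> e = 1/6 \<and> f = 1/6)"
    by auto
  show ?thesis
    unfolding part1 part2 part2' fin using part1'
    unfolding a_def b_def c_def d_def e_def f_def by blast
qed
end
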